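(* Let $\lambda=(\lambda_1,\dots,\lambda_n)\in\mathbb{R}^n$ with $\lambda_1+\dots+\lambda_n>0$. (i) The following are equivalent: (a) $N(\lambda)=n$; (b) there is no partition $(I_1,I_2)$ of $\{1,\dots,n\}$ into two sets with $s_{I_1}(\lambda)>0$ and $s_{I_2}(\lambda)>0$. (ii) There exists $k\in\mathbb{Z}$ with $\tau^k(\lambda)>0$. Moreover, if there is no partition $(I_1,I_2)$ of $\{1,\dots,n\}$ with $s_{I_1}(\lambda)>0$ and $s_{I_2}(\lambda)>0$, then such an integer $k$ is uniquely determined modulo $n$.
   Context: $s_J(\lambda)=\sum_{i\in J}\lambda_i$. $\delta(\lambda)$ is the minimum of $s_J(\lambda)/|J|$ over subsets $J\subset\{1,\dots,n\}$ with $s_J(\lambda)>0$ (here $\delta(\lambda)>0$ since the total sum is positive), and $N(\lambda)$ is the minimum of $|J|$ over subsets $J$ with $s_J(\lambda)/|J|=\delta(\lambda)$. $\mathfrak{S}_n$ acts on $\mathbb{R}^n$ by $\sigma(\lambda)=(\lambda_{\sigma^{-1}(1)},\dots,\lambda_{\sigma^{-1}(n)})$; $\tau\in\mathfrak{S}_n$ sends $i$ to $i+1$ for $i<n$ and $n$ to $1$. For $\mu\in\mathbb{R}^n$, $\mu>0$ means $\mu_1+\dots+\mu_i>0$ for all $i\in\{1,\dots,n\}$. *)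

theory Defs
  imports Complex_Main
begin

text \<open>Vectors in R^n are functions nat => real, with coordinates indexed by 1..n.\<close>

definition sJ :: "nat set \<Rightarrow> (nat \<Rightarrow> real) \<Rightarrow> real" where
  "sJ J lam = (\<Sum>i\<in>J. lam i)"

definition delta :: "nat \<Rightarrow> (nat \<Rightarrow> real) \<Rightarrow> real" where
  "delta n lam = Min {sJ J lam / real (card J) | J. J \<subseteq> {1..n} \<and> sJ J lam > 0}"

definition Nlam :: "nat \<Rightarrow> (nat \<Rightarrow> real) \<Rightarrow> nat" where
  "Nlam n lam = Min {card J | J. J \<subseteq> {1..n} \<and> sJ J lam / real (card J) = delta n lam}"

definition tau :: "nat \<Rightarrow> nat \<Rightarrow> nat" where
  "tau n i = (if i < n then i + 1 else 1)"

definition tau_inv :: "nat \<Rightarrow> nat \<Rightarrow> nat" where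
  "tau_inv n i = (if 1 < i then i - 1 else n)"

definition tau_zpow :: "nat \<Rightarrow> int \<Rightarrow> nat \<Rightarrow> nat" where
  "tau_zpow n k = (if 0 \<le> k then tau n ^^ nat k else tau_inv n ^^ nat (- k))"

text \<open>Action sigma(lam) = (lam (sigma^-1 1), ..., lam (sigma^-1 n)) for sigma = tau^k,
  i.e. tau^k(lam) = lam o tau^(-k).\<close>
definition tau_act :: "nat \<Rightarrow> int \<Rightarrow> (nat \<Rightarrow> real) \<Rightarrow> (nat \<Rightarrow> real)" where
  "tau_act n k lam = (\<lambda>i. lam (tau_zpow n (- k) i))"

text \<open>mu > 0 : all partial sums mu_1 + ... + mu_i (1 <= i <= n) are positive.\<close>
definition pos_vec :: "nat \<Rightarrow> (nat \<Rightarrow> real) \<Rightarrow> bool" where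
  "pos_vec n mu = (\<forall>i\<in>{1..n}. (\<Sum>j=1..i. mu j) > 0)"

definition has_pos_partition :: "nat \<Rightarrow> (nat \<Rightarrow> real) \<Rightarrow> bool" where
  "has_pos_partition n lam = (\<exists>I1 I2. I1 \<union> I2 = {1..n} \<and> I1 \<inter> I2 = {} \<and>
      sJ I1 lam > 0 \<and> sJ I2 lam > 0)"

end

theory Submission imports Defs begin

definition aa :: "nat \<Rightarrow> (nat \<Rightarrow> real) \<Rightarrow> nat \<Rightarrow> real" where
  "aa n lam j = lam (j mod n + 1)"
definition SS :: "nat \<Rightarrow> (nat \<Rightarrow> real) \<Rightarrow> nat \<Rightarrow> real" where
  "SS n lam t = (\<Sum>j<t. aa n lam j)"

lemma SS_le: "t \<le> n \<Longrightarrow> SS n lam t = sJ {1..t} lam"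
proof (induction t)
  case 0 then show ?case by (simp add: SS_def sJ_def)
next
  case (Suc t)
  have "SS n lam (Suc t) = SS n lam t + lam (Suc t)"
    using Suc.prems by (simp add: SS_def aa_def)
  also have "\<dots> = sJ {1..Suc t} lam" using Suc by (simp add: sJ_def)
  finally show ?case .
qed

lemma SS_per: "SS n lam (t + n) = SS n lam t + SS n lam n"
proof (induction t)
  case 0 then show ?case by (simp add: SS_def)
next
  case (Suc t)
  have "aa n lam (t + n) = aa n lam t" by (simp add: aa_def)
  then show ?case using Suc by (simp add: SS_def)
qed

lemma rot_sum: "(\<Sum>j=1..i. lam ((j - 1 + c) mod n + 1)) = SS n lam (c + i) - SS n lam c"
proof (induction i)
  case 0 then show ?case by simp
next
  case (Suc i)
  then show ?case by (simp add: SS_def aa_def add.commute)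
qed

lemma tau_pow0: "p < n \<Longrightarrow> (tau n ^^ m) (Suc p) = (p + m) mod n + 1"
proof (induction m)
  case 0 then show ?case by auto
next
  case (Suc m)
  have "(p + Suc m) mod n = Suc (p + m) mod n" by simp
  moreover have "(p+m) mod n < n" using Suc by auto
  then have "Suc ((p+m) mod n) \<noteq> n \<Longrightarrow> Suc((p+m) mod n) < n" by linarith
  ultimately show ?case using Suc unfolding tau_def by (auto simp: mod_Suc)
qed

lemma tau_pow: "n \<ge> 1 \<Longrightarrow> i \<in> {1..n} \<Longrightarrow> (tau n ^^ m) i = (i - 1 + m) mod n + 1"
  using tau_pow0[of "i - 1" n m] by (cases i) auto

lemma tau_inv_pow: "n \<ge> 1 \<Longrightarrow> i \<in> {1..n} \<Longrightarrow>
   (tau_inv n ^^ m) i = nat ((int i - 1 - int m) mod int n) + 1"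
proof (induction m)
  case 0 then show ?case by (auto simp: nat_diff_distrib)
next
  case (Suc m)
  define z where "z = int i - 1 - int m"
  have e: "int i - 1 - int (Suc m) = z - 1" by (simp add: z_def)
  have r: "(z - 1) mod int n = (z mod int n - 1) mod int n" by (simp add: mod_diff_left_eq)
  have b: "0 \<le> z mod int n" "z mod int n < int n" using Suc.prems by auto
  show ?case
  proof (cases "z mod int n = 0")
    case True
    then have "(z - 1) mod int n = int n - 1" using r Suc.prems
      by (simp add: zmod_minus1)
    moreover have "nat (int n - 1) + 1 = n" using Suc.prems by (cases n) auto
    ultimately show ?thesis using Suc True e by (simp add: tau_inv_def z_def[symmetric])
  next
    case False
    then have zz: "(z - 1) mod int n = z mod int n - 1" using r b by simp
    have "0 < z mod int n" using b False by linarith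
    then show ?thesis using Suc False e b zz \<open>0 < z mod int n\<close> by (simp add: tau_inv_def z_def[symmetric] nat_diff_distrib)
  qed
qed

lemma tau_zpow_eq: "n \<ge> 1 \<Longrightarrow> i \<in> {1..n} \<Longrightarrow>
   tau_zpow n k i = nat ((int i - 1 + k) mod int n) + 1"
proof (cases "0 \<le> k")
  case True
  assume n: "n \<ge> 1" and i: "i \<in> {1..n}"
  have "tau_zpow n k i = (i - 1 + nat k) mod n + 1" using True tau_pow[OF n i] by (simp add: tau_zpow_def)
  moreover have "int ((i - 1 + nat k) mod n) = (int i - 1 + k) mod int n"
    using True i by (simp add: of_nat_mod of_nat_diff algebra_simps)
  ultimately show ?thesis by (metis nat_int)
next
  case False
  assume n: "n \<ge> 1" and i: "i \<in> {1..n}"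
  show ?thesis using False tau_inv_pow[OF n i, of "nat (-k)"] by (simp add: tau_zpow_def)
qed

lemma tau_act_rot: "n \<ge> 1 \<Longrightarrow> i \<in> {1..n} \<Longrightarrow>
   tau_act n k lam i = lam ((i - 1 + nat ((- k) mod int n)) mod n + 1)"
proof -
  assume n: "n \<ge> 1" and i: "i \<in> {1..n}"
  have "int ((i - 1 + nat ((- k) mod int n)) mod n) = (int (i - 1) + (- k) mod int n) mod int n"
    using n by (simp add: of_nat_mod)
  also have "\<dots> = (int i - 1 + - k) mod int n"
    using i by (simp add: mod_add_right_eq of_nat_diff)
  finally have "nat ((int i - 1 + - k) mod int n) = (i - 1 + nat ((- k) mod int n)) mod n"
    by (metis nat_int)
  then show ?thesis using tau_zpow_eq[OF n i, of "-k"] by (simp add: tau_act_def)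
qed

lemma pos_iff: "n \<ge> 1 \<Longrightarrow> pos_vec n (tau_act n k lam) \<longleftrightarrow>
   (\<forall>i\<in>{1..n}. SS n lam (nat ((- k) mod int n) + i) > SS n lam (nat ((- k) mod int n)))"
proof -
  assume n: "n \<ge> 1"
  define c where "c = nat ((- k) mod int n)"
  have "(\<Sum>j=1..i. tau_act n k lam j) = SS n lam (c + i) - SS n lam c" if "i \<in> {1..n}" for i
  proof -
    have "(\<Sum>j=1..i. tau_act n k lam j) = (\<Sum>j=1..i. lam ((j - 1 + c) mod n + 1))"
      using that by (intro sum.cong) (auto simp: tau_act_rot[OF n] c_def)
    then show ?thesis using rot_sum[of lam c n i] by simp
  qed
  then show ?thesis unfolding pos_vec_def c_def[symmetric] by auto
qed

lemma exist_off:
  assumes n: "n \<ge> 1" and s: "SS n lam n > 0"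
  shows "\<exists>c<n. \<forall>i\<in>{1..n}. SS n lam (c + i) > SS n lam c"
proof -
  define M where "M = Min (SS n lam ` {0..<n})"
  define A where "A = {j\<in>{0..<n}. SS n lam j = M}"
  have fin: "finite (SS n lam ` {0..<n})" by simp
  have ne: "SS n lam ` {0..<n} \<noteq> {}" using n by auto
  have Mle: "M \<le> SS n lam j" if "j < n" for j using that fin unfolding M_def by auto
  have "M \<in> SS n lam ` {0..<n}" using Min_in[OF fin ne] unfolding M_def .
  then have Ane: "A \<noteq> {}" unfolding A_def by auto
  have Afin: "finite A" unfolding A_def by simp
  define c where "c = Max A"
  have cA: "c \<in> A" using Max_in[OF Afin Ane] unfolding c_def .
  then have cn: "c < n" and cM: "SS n lam c = M" unfolding A_def by auto
  have big: "j \<le> c" if "j \<in> A" for j using Max_ge[OF Afin that] unfolding c_def .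
  have "\<forall>i\<in>{1..n}. SS n lam (c + i) > SS n lam c"
  proof
    fix i assume i: "i \<in> {1..n}"
    show "SS n lam (c + i) > SS n lam c"
    proof (cases "c + i < n")
      case True
      have "SS n lam (c + i) \<noteq> M"
      proof
        assume "SS n lam (c + i) = M"
        then have "c + i \<in> A" using True unfolding A_def by auto
        then show False using big i by fastforce
      qed
      then show ?thesis using Mle[OF True] cM by linarith
    next
      case False
      define r where "r = c + i - n"
      have ci: "c + i = r + n" using False r_def by simp
      have "r < n" using cn i r_def by auto
      then have "SS n lam r \<ge> M" using Mle by blast
      then show ?thesis using SS_per[of n lam r] cM s unfolding ci by linarith
    qed
  qed
  then show ?thesis using cn by blast
qed

lemma uniq_off:
  assumes n: "n \<ge> 1" and cc: "c < c'" "c' < n"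
    and p1: "\<forall>i\<in>{1..n}. SS n lam (c + i) > SS n lam c"
    and p2: "\<forall>i\<in>{1..n}. SS n lam (c' + i) > SS n lam c'"
  shows "has_pos_partition n lam"
proof -
  define I1 where "I1 = {Suc c..c'}"
  define I2 where "I2 = {1..n} - I1"
  have un: "{1..c'} = {1..c} \<union> I1" and dj: "{1..c} \<inter> I1 = {}" using cc unfolding I1_def by auto
  have "sJ {1..c'} lam = sJ {1..c} lam + sJ I1 lam"
    unfolding sJ_def un by (rule sum.union_disjoint) (auto simp: I1_def dj)
  then have s1: "sJ I1 lam = SS n lam c' - SS n lam c" using SS_le[of c' n lam] SS_le[of c n lam] cc by simp
  have sub: "I1 \<subseteq> {1..n}" using cc unfolding I1_def by auto
  have s2: "sJ I2 lam = SS n lam n - sJ I1 lam"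
    unfolding I2_def sJ_def using sub SS_le[of n n lam] by (simp add: sum_diff sJ_def)
  have a: "SS n lam c' > SS n lam c" using p1[rule_format, of "c' - c"] cc by (simp add: Suc_leI)
  have "SS n lam (c' + (n + c - c')) > SS n lam c'" using p2[rule_format, of "n + c - c'"] cc by (simp add: Suc_leI)
  moreover have "c' + (n + c - c') = c + n" using cc by simp
  ultimately have b: "SS n lam c + SS n lam n > SS n lam c'" using SS_per[of n lam c] by simp
  show ?thesis unfolding has_pos_partition_def
    apply (rule exI[of _ I1], rule exI[of _ I2])
    using s1 s2 a b sub unfolding I2_def by auto
qed

lemma part_i:
  assumes s: "sJ {1..n} lam > 0"
  shows "Nlam n lam = n \<longleftrightarrow> \<not> has_pos_partition n lam"
proof -
  define d where "d = delta n lam"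
  define F where "F = {sJ J lam / real (card J) | J. J \<subseteq> {1..n} \<and> sJ J lam > 0}"
  have finF: "finite F" unfolding F_def
    by (rule finite_image_set) (rule finite_subset[of _ "Pow {1..n}"], auto)
  have card_full: "card {1..n} = n" by simp
  have "sJ {1..n} lam / real n \<in> F" unfolding F_def using s card_full by (metis (mono_tags, lifting) mem_Collect_eq order_refl)
  then have neF: "F \<noteq> {}" by auto
  have dF: "d = Min F" unfolding d_def delta_def F_def ..
  have d_le: "d \<le> sJ J lam / real (card J)" if "J \<subseteq> {1..n}" "sJ J lam > 0" for J
    unfolding dF using that finF by (intro Min_le) (auto simp: F_def)
  have "d \<in> F" unfolding dF using Min_in[OF finF neF] .
  then obtain J0 where J0: "J0 \<subseteq> {1..n}" "sJ J0 lam > 0" "sJ J0 lam / real (card J0) = d"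
    unfolding F_def by auto
  have cardpos: "card J > 0" if "J \<subseteq> {1..n}" "sJ J lam > 0" for J
  proof (rule ccontr)
    assume "\<not> card J > 0"
    then have "J = {}" using that finite_subset[OF that(1)] by auto
    then show False using that by (simp add: sJ_def)
  qed
  have dpos: "d > 0" using J0 cardpos[OF J0(1,2)] by auto
  have dsn: "d \<le> sJ {1..n} lam / real n" using d_le[of "{1..n}"] s by simp
  define G where "G = {card J | J. J \<subseteq> {1..n} \<and> sJ J lam / real (card J) = d}"
  have finG: "finite G" unfolding G_def
    by (rule finite_image_set) (rule finite_subset[of _ "Pow {1..n}"], auto)
  have J0G: "card J0 \<in> G" unfolding G_def using J0 by auto
  have NG: "Nlam n lam = Min G" unfolding Nlam_def G_def d_def ..
  show ?thesis
  proof
    assume N: "Nlam n lam = n"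
    show "\<not> has_pos_partition n lam"
    proof
      assume "has_pos_partition n lam"
      then obtain I1 I2 where P: "I1 \<union> I2 = {1..n}" "I1 \<inter> I2 = {}" "sJ I1 lam > 0" "sJ I2 lam > 0"
        unfolding has_pos_partition_def by blast
      have sub1: "I1 \<subseteq> {1..n}" and sub2: "I2 \<subseteq> {1..n}" using P(1) by auto
      have c1: "card I1 > 0" using cardpos[OF sub1 P(3)] .
      have c2: "card I2 > 0" using cardpos[OF sub2 P(4)] .
      have fin1: "finite I1" and fin2: "finite I2" using sub1 sub2 finite_subset by auto
      have cs: "card I1 + card I2 = n" using card_Un_disjoint[OF fin1 fin2 P(2)] P(1) by simp
      have ss: "sJ I1 lam + sJ I2 lam = sJ {1..n} lam"
        unfolding sJ_def P(1)[symmetric] using sum.union_disjoint[OF fin1 fin2 P(2), of lam] by simp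
      have small: "\<exists>I. I \<subseteq> {1..n} \<and> sJ I lam > 0 \<and> card I < n \<and>
                 sJ I lam / real (card I) \<le> sJ {1..n} lam / real n"
      proof (rule ccontr)
        assume "\<not> ?thesis"
        then have g1: "sJ I1 lam / real (card I1) > sJ {1..n} lam / real n"
          and g2: "sJ I2 lam / real (card I2) > sJ {1..n} lam / real n"
          using sub1 sub2 P(3,4) cs c1 c2 by force+
        have "sJ I1 lam > real (card I1) * (sJ {1..n} lam / real n)"
          using g1 c1 by (simp add: field_simps)
        moreover have "sJ I2 lam > real (card I2) * (sJ {1..n} lam / real n)"
          using g2 c2 by (simp add: field_simps)
        ultimately have "sJ {1..n} lam > (real (card I1) + real (card I2)) * (sJ {1..n} lam / real n)"
          using ss by (simp only: distrib_right)
        also have "(real (card I1) + real (card I2)) = real n" using cs by simp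
        finally show False using c1 cs by simp
      qed
      have "Min G < n"
      proof (cases "card J0 < n")
        case True
        then show ?thesis using Min_le[OF finG J0G] by linarith
      next
        case False
        then have "card J0 = n" using card_mono[OF _ J0(1)] by fastforce
        then have "J0 = {1..n}" using card_subset_eq[OF _ J0(1)] by simp
        then have dd: "d = sJ {1..n} lam / real n" using J0 by simp
        obtain I where I: "I \<subseteq> {1..n}" "sJ I lam > 0" "card I < n"
           "sJ I lam / real (card I) \<le> sJ {1..n} lam / real n" using small by blast
        have "sJ I lam / real (card I) = d" using d_le[OF I(1,2)] I(4) dd by linarith
        then have "card I \<in> G" unfolding G_def using I by auto
        then show ?thesis using Min_le[OF finG] I(3) by fastforce
      qed
      then show False using N NG by simp
    qed
  next
    assume np: "\<not> has_pos_partition n lam"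
    have allG: "m = n" if mG: "m \<in> G" for m
    proof -
      obtain J where J: "m = card J" "J \<subseteq> {1..n}" "sJ J lam / real (card J) = d"
        using mG unfolding G_def by auto
      have cJ: "card J > 0" using J dpos by (metis div_by_0 of_nat_0 gr0I order_less_irrefl)
      have sJp: "sJ J lam > 0" using J(3) dpos cJ by (metis of_nat_0_less_iff zero_less_divide_iff order_less_asym)
      show ?thesis
      proof (rule ccontr)
        assume "m \<noteq> n"
        then have Jne: "J \<noteq> {1..n}" using J by auto
        then have cl: "card J < n" using J(2) psubset_card_mono[of "{1..n}" J] by auto
        define C where "C = {1..n} - J"
        have "\<not> sJ C lam > 0"
        proof
          assume "sJ C lam > 0"
          then have "has_pos_partition n lam" unfolding has_pos_partition_def C_def
            using J(2) sJp by (intro exI[of _ J] exI[of _ "{1..n} - J"]) auto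
          then show False using np by simp
        qed
        moreover have "sJ C lam = sJ {1..n} lam - sJ J lam"
          unfolding C_def sJ_def using J(2) by (simp add: sum_diff)
        ultimately have ge: "sJ J lam \<ge> sJ {1..n} lam" by linarith
        have "sJ {1..n} lam / real n < sJ {1..n} lam / real (card J)"
          using cl cJ s by (intro divide_strict_left_mono) auto
        also have "\<dots> \<le> sJ J lam / real (card J)" using ge cJ by (simp add: divide_right_mono)
        finally show False using J(3) dsn by linarith
      qed
    qed
    have "Min G \<in> G" using Min_in[OF finG] J0G by auto
    then show "Nlam n lam = n" using NG allG by simp
  qed
qed

theorem mainTheorem12:
  fixes n :: nat and lam :: "nat \<Rightarrow> real"
  assumes "sJ {1..n} lam > 0"
  shows "(Nlam n lam = n \<longleftrightarrow> \<not> has_pos_partition n lam)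
    \<and> (\<exists>k::int. pos_vec n (tau_act n k lam))
    \<and> (\<not> has_pos_partition n lam \<longrightarrow>
        (\<forall>k k'::int. pos_vec n (tau_act n k lam) \<and> pos_vec n (tau_act n k' lam)
           \<longrightarrow> k mod int n = k' mod int n))"
proof -
  have n: "n \<ge> 1"
  proof (rule ccontr)
    assume "\<not> n \<ge> 1" then have "n = 0" by simp
    then show False using assms by (simp add: sJ_def)
  qed
  have sp: "SS n lam n > 0" using SS_le[of n n lam] assms by simp
  have ex: "\<exists>k::int. pos_vec n (tau_act n k lam)"
  proof -
    obtain c where c: "c < n" "\<forall>i\<in>{1..n}. SS n lam (c + i) > SS n lam c"
      using exist_off[OF n sp] by blast
    have "nat ((- (- int c)) mod int n) = c" using c(1) by simp
    then show ?thesis using pos_iff[OF n, of "- int c" lam] c(2) by (intro exI[of _ "- int c"]) simp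
  qed
  have un: "k mod int n = k' mod int n"
    if np: "\<not> has_pos_partition n lam" and pk: "pos_vec n (tau_act n k lam)"
      and pk': "pos_vec n (tau_act n k' lam)" for k k' :: int
  proof -
    define c where "c = nat ((- k) mod int n)"
    define c' where "c' = nat ((- k') mod int n)"
    have p1: "\<forall>i\<in>{1..n}. SS n lam (c + i) > SS n lam c" using pk pos_iff[OF n] c_def by simp
    have p2: "\<forall>i\<in>{1..n}. SS n lam (c' + i) > SS n lam c'" using pk' pos_iff[OF n] c'_def by simp
    have cn: "c < n" "c' < n" using n unfolding c_def c'_def by (simp_all add: nat_less_iff)
    have "c = c'"
    proof (rule ccontr)
      assume "c \<noteq> c'"
      then have "c < c' \<or> c' < c" by arith
      then have "has_pos_partition n lam" using uniq_off[OF n _ _ p1 p2] uniq_off[OF n _ _ p2 p1] cn by blast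
      then show False using np by simp
    qed
    then have e: "(- k) mod int n = (- k') mod int n" unfolding c_def c'_def using n
      by (simp add: nat_eq_iff2)
    have "k mod int n = (- ((- k) mod int n)) mod int n" by (simp add: mod_minus_eq)
    also have "\<dots> = (- ((- k') mod int n)) mod int n" using e by simp
    also have "\<dots> = k' mod int n" by (simp add: mod_minus_eq)
    finally show ?thesis .
  qed
  show ?thesis using part_i[OF assms] ex un by blast
qed

end
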